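(* Let $m,M\in\{0.01,0.02,\dots,0.99\}$ with $m\le M$ and $\varepsilon\in\{0,0.01,\dots,1.99,2\}\cup\{2.1,2.2,\dots,10\}\cup\{11,12,\dots,100\}$. For integers $N>1$, $J\subseteq[N]$, $a=(a_1,\dots,a_N)\in[m,M]^N$ and $z=(z_1,\dots,z_N)\in[m,M]^N$, let \[ g_{J,N}(a;z)=\Big(e^{-\varepsilon}+(1-e^{-\varepsilon})\frac{m+\sum_{i=1}^Na_i}{N+1}\Big)^{-1}\prod_{i\in J}\frac{N+1}{N+\frac{a_i}{z_i}}\prod_{i\in[N]\setminus J}\frac{N+1}{N+\frac{1-a_i}{1-z_i}}. \] Then \[ \sup_{N>1}\max_{J\subseteq[N]}\max_{a\in[m,M]^N}\max_{z\in[m,M]^N}g_{J,N}(a;z)=\max\Big\{\big(e^{-\varepsilon}+(1-e^{-\varepsilon})M\big)^{-1}e^{1-\frac{1-M}{1-m}},\ \big(e^{-\varepsilon}+(1-e^{-\varepsilon})m\big)^{-1}e^{1-\frac{m}{M}}\Big\}. \]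
   Context: $[N]=\{1,\dots,N\}$. *)

theory Defs
  imports Complex_Main
begin

definition mgrid :: "real set" where
  "mgrid = {real k / 100 | k::nat. 1 \<le> k \<and> k \<le> 99}"

definition eps_grid :: "real set" where
  "eps_grid = {real k / 100 | k::nat. k \<le> 200}
            \<union> {real k / 10 | k::nat. 21 \<le> k \<and> k \<le> 100}
            \<union> {real k | k::nat. 11 \<le> k \<and> k \<le> 100}"

definition gfun :: "real \<Rightarrow> real \<Rightarrow> nat set \<Rightarrow> nat \<Rightarrow> (nat \<Rightarrow> real) \<Rightarrow> (nat \<Rightarrow> real) \<Rightarrow> real" where
  "gfun \<epsilon> m J N a z =
     inverse (exp (-\<epsilon>) + (1 - exp (-\<epsilon>)) * ((m + (\<Sum>i=1..N. a i)) / (real N + 1)))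
     * (\<Prod>i\<in>J. (real N + 1) / (real N + a i / z i))
     * (\<Prod>i\<in>{1..N} - J. (real N + 1) / (real N + (1 - a i) / (1 - z i)))"

definition gvals :: "real \<Rightarrow> real \<Rightarrow> real \<Rightarrow> real set" where
  "gvals \<epsilon> m M = {gfun \<epsilon> m J N a z | J N a z.
      N > 1 \<and> J \<subseteq> {1..N} \<and>
      (\<forall>i\<in>{1..N}. a i \<in> {m..M}) \<and> (\<forall>i\<in>{1..N}. z i \<in> {m..M})}"

end

theory Submission
  imports Defs "HOL-Analysis.Analysis" "HOL-Real_Asymp.Real_Asymp"
begin


lemma pade_ln:
  fixes y :: real assumes "0 \<le> y"
  shows "ln (1 + y) \<le> y * (6 + y) / (6 + 4 * y)"
proof -
  let ?f = "\<lambda>x::real. x * (6 + x) / (6 + 4 * x) - ln (1 + x)"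
  have "?f 0 \<le> ?f y"
  proof (rule DERIV_nonneg_imp_nondecreasing[OF assms])
    fix x :: real assume x: "0 \<le> x" "x \<le> y"
    have d: "DERIV ?f x :> ((6 + 2*x) * (6 + 4*x) - 4 * (x * (6 + x))) / (6 + 4*x)^2 - 1 / (1 + x)"
      using x by (auto intro!: derivative_eq_intros simp: power2_eq_square)
    have "((6 + 2*x) * (6 + 4*x) - 4 * (x * (6 + x))) / (6 + 4*x)^2 - 1 / (1 + x)
          = 4 * x^3 / ((6 + 4*x)^2 * (1 + x))"
      using x by (simp add: divide_simps power2_eq_square power3_eq_cube) algebra
    moreover have "4 * x^3 / ((6 + 4*x)^2 * (1 + x)) \<ge> 0" using x by simp
    ultimately show "\<exists>d. DERIV ?f x :> d \<and> 0 \<le> d" using d by metis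
  qed
  then show ?thesis by simp
qed

lemma ln_le_pade2:
  fixes q :: real assumes "0 < q" "q \<le> 1"
  shows "ln q \<le> 2 * (q - 1) / (q + 1)"
proof -
  let ?f = "\<lambda>x::real. 2 * (x - 1) / (x + 1) - ln x"
  have "?f 1 \<le> ?f q"
  proof (rule DERIV_nonpos_imp_nonincreasing[OF assms(2)])
    fix x :: real assume x: "q \<le> x" "x \<le> 1"
    have d: "DERIV ?f x :> (2 * (x + 1) - 2 * (x - 1)) / (x + 1)^2 - 1 / x"
      using x assms by (auto intro!: derivative_eq_intros simp: power2_eq_square)
    have "(2 * (x + 1) - 2 * (x - 1)) / (x + 1)^2 - 1 / x = - ((x - 1)^2 / (x * (x + 1)^2))"
      using x assms by (simp add: divide_simps power2_eq_square) algebra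
    moreover have "(x - 1)^2 / (x * (x + 1)^2) \<ge> 0" using x assms by simp
    ultimately show "\<exists>d. DERIV ?f x :> d \<and> d \<le> 0" using d by (metis neg_le_0_iff_le)
  qed
  then show ?thesis by simp
qed

lemma ln_concave2:
  fixes x y l :: real assumes "0 < x" "0 < y" "0 \<le> l" "l \<le> 1"
  shows "(1 - l) * ln x + l * ln y \<le> ln ((1 - l) * x + l * y)"
proof -
  have "convex_on {0<..} (\<lambda>x. - ln x)" using ln_concave by (simp add: concave_on_def)
  from convex_onD[OF this, of l x y] assms
  show ?thesis by (simp add: algebra_simps)
qed



lemma poly_d:
  fixes n t :: real assumes "3 \<le> n" "0 \<le> t" "t \<le> 1"
  shows "(10-t)*(n-t)*(6*n-2*t) \<le> (6*n-3*n*t+2*t^2-5*t)*(20*n-10*t+t^2)"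
proof -
  have e: "(6*n-3*n*t+2*t^2-5*t)*(20*n-10*t+t^2) - (10-t)*(n-t)*(6*n-2*t)
     = n * (n*(60-54*t) - t*(80-68*t+3*t^2)) + t^2*(30-23*t+2*t^2)"
    by (simp add: algebra_simps power2_eq_square)
  have a1: "n*(60-54*t) \<ge> 3*(60-54*t)" using assms by (intro mult_right_mono) auto
  have t3: "t^3 \<le> t^2" using assms by (simp add: power_decreasing)
  have h65: "65*(t-1)^2 = 65*t^2 - 130*t + 65" by (simp add: power2_eq_square algebra_simps)
  have "0 \<le> 65*(t-1)^2" by simp
  hence a2: "180 - 242*t + 65*t^2 \<ge> 0" using assms h65 by linarith
  have "n*(60-54*t) - t*(80-68*t+3*t^2) \<ge> 0"
    using a1 a2 t3 by (simp add: algebra_simps power2_eq_square power3_eq_cube) 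
  hence "n * (n*(60-54*t) - t*(80-68*t+3*t^2)) \<ge> 0" using assms by simp
  moreover have "t^2*(30-23*t+2*t^2) \<ge> 0" using assms by (intro mult_nonneg_nonneg) auto
  ultimately show ?thesis using e by linarith
qed

lemma key_ineq:
  fixes N t :: real assumes "2 \<le> N" "0 \<le> t" "t \<le> 1"
  shows "N * ln ((N+1)/(N+1-t)) + ln ((N+1)/(N + (1 - t/2 + t^2/20))) \<le> t"
proof -
  define n where "n = N + 1"
  have n3: "3 \<le> n" using assms n_def by simp
  define y where "y = t / (n - t)"
  have y0: "0 \<le> y" using assms n3 y_def by simp
  have "(N+1)/(N+1-t) = 1 + y" using n3 assms by (simp add: y_def n_def field_simps)
  hence l1: "ln ((N+1)/(N+1-t)) \<le> y * (6 + y) / (6 + 4 * y)" using pade_ln[OF y0] by simp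
  define z where "z = t*(10-t)/(20*n-10*t+t^2)"
  have "0 \<le> t^2" by simp
  have den: "20*n-10*t+t^2 > 0" using n3 assms \<open>0 \<le> t^2\<close> by linarith
  have z0: "0 \<le> z" using assms den z_def by simp
  have "(N+1)/(N + (1 - t/2 + t^2/20)) = 1 + z"
    using den n3 by (simp add: z_def n_def field_simps) (simp add: algebra_simps power2_eq_square eval_nat_numeral)
  hence l2: "ln ((N+1)/(N + (1 - t/2 + t^2/20))) \<le> z" using ln_add_one_self_le_self[OF z0] by simp
  have T1: "N * (y * (6 + y) / (6 + 4 * y)) = (n-1)*t*(6*n-5*t)/((n-t)*(6*n-2*t))"
  proof -
    have p1: "n - t > 0" "6*n-2*t > 0" "6 * (n-t) + 4 * t > 0" using n3 assms by auto
    have Nn: "N = n - 1" using n_def by simp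
    have q1: "6 + y = (6*n-5*t)/(n-t)" "6 + 4*y = (6*n-2*t)/(n-t)"
      unfolding y_def using p1 by (simp_all add: field_simps)
    have "y * (6 + y) / (6 + 4 * y) = t*(6*n-5*t)/((n-t)*(6*n-2*t))"
    proof -
      have "y * (6 + y) / (6 + 4 * y) = y * ((6*n-5*t)/(n-t)) / ((6*n-2*t)/(n-t))" unfolding q1 ..
      also have "\<dots> = y * (6*n-5*t) / (6*n-2*t)" using p1 by (simp add: divide_simps)
      also have "\<dots> = t*(6*n-5*t)/((n-t)*(6*n-2*t))" unfolding y_def by simp
      finally show ?thesis .
    qed
    thus ?thesis unfolding Nn by (simp add: mult.assoc)
  qed
  have pd: "(10-t)*(n-t)*(6*n-2*t) \<le> (6*n-3*n*t+2*t^2-5*t)*(20*n-10*t+t^2)"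
    by (rule poly_d[OF n3 assms(2,3)])
  have d2: "(n-t)*(6*n-2*t) > 0" using n3 assms by simp
  have "z \<le> t * (6*n-3*n*t+2*t^2-5*t) / ((n-t)*(6*n-2*t))"
  proof -
    have "t*(10-t)*((n-t)*(6*n-2*t)) \<le> t*(6*n-3*n*t+2*t^2-5*t)*(20*n-10*t+t^2)"
      using pd assms mult_left_mono[OF pd assms(2)] by (simp add: algebra_simps)
    thus ?thesis using den d2 by (simp add: z_def divide_simps)
  qed
  also have "\<dots> = t - (n-1)*t*(6*n-5*t)/((n-t)*(6*n-2*t))"
    using d2 by (simp add: field_simps) (simp add: algebra_simps power2_eq_square)
  finally have "z + N * (y * (6 + y) / (6 + 4 * y)) \<le> t" using T1 by simp
  moreover have "N * ln ((N+1)/(N+1-t)) \<le> N * (y * (6 + y) / (6 + 4 * y))"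
    using l1 assms by (intro mult_left_mono) auto
  ultimately show ?thesis using l2 by linarith
qed



lemma chord_gen:
  fixes n x u v s :: real
  assumes "0 \<le> n" "0 < u" "0 < v" "0 \<le> s" "s \<le> 1" "x = (1 - s) * u + s * v"
  shows "ln (n + 1) - ln (n + x) \<le> (1 - s) * (ln (n + 1) - ln (n + u)) + s * (ln (n + 1) - ln (n + v))"
proof -
  have e: "n + x = (1 - s) * (n + u) + s * (n + v)" using assms(6) by (simp add: algebra_simps)
  have "(1 - s) * ln (n + u) + s * ln (n + v) \<le> ln ((1 - s) * (n + u) + s * (n + v))"
    using assms by (intro ln_concave2) auto
  hence c: "(1 - s) * ln (n + u) + s * ln (n + v) \<le> ln (n + x)" using e by simp
  have "(1 - s) * (ln (n + 1) - ln (n + u)) + s * (ln (n + 1) - ln (n + v))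
     = ln (n + 1) - ((1 - s) * ln (n + u) + s * ln (n + v))" by (simp add: algebra_simps)
  thus ?thesis using c by linarith
qed

lemma ln_ratio_nonneg:
  fixes n x :: real assumes "0 \<le> n" "0 < x" "x \<le> 1"
  shows "0 \<le> ln ((n+1)/(n+x))"
  using assms by (subst ln_ge_zero_iff) auto

lemma factor_J:
  fixes n a z m M :: real
  assumes "0 < m" "m < M" "M < 1" "m \<le> a" "a \<le> M" "m \<le> z" "z \<le> M" "0 \<le> n"
  shows "ln ((n+1)/(n + a/z)) \<le> (1 - (a-m)/(M-m)) * ln ((n+1)/(n+m/M))
           + ((a-m)/(M-m)) * ln ((n+1)/(n + (1-M)/(1-m)))"
proof -
  define s where "s = (a-m)/(M-m)"
  have s01: "0 \<le> s" "s \<le> 1" using assms by (auto simp: s_def divide_simps)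
  have az: "a/M \<le> a/z" using assms by (intro divide_left_mono) auto
  have ap: "0 < a/M" using assms by simp
  have "ln ((n+1)/(n + a/z)) \<le> ln ((n+1)/(n + a/M))"
  proof -
    have p: "0 < n + a/z" "0 < n + a/M" using assms by (simp_all add: add_nonneg_pos)
    have "(n+1)/(n+a/z) \<le> (n+1)/(n+a/M)" using p az assms by (intro divide_left_mono) auto
    moreover have "0 < (n+1)/(n+a/z)" using p assms by simp
    ultimately show ?thesis by (rule ln_mono)
  qed
  also have "\<dots> = ln (n+1) - ln (n + a/M)"
  proof -
    have "0 < n + a/M" using ap assms by linarith
    thus ?thesis using assms by (simp add: ln_div)
  qed
  also have "\<dots> \<le> (1 - s) * (ln (n + 1) - ln (n + m/M)) + s * (ln (n + 1) - ln (n + 1))"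
  proof (rule chord_gen)
    have h: "M - m \<noteq> 0" "M \<noteq> 0" using assms by auto
    have k: "s*(M-m) = a - m" using h by (simp add: s_def)
    have "(1-s)*(m/M) + s*1 = ((1-s)*m + s*M)/M" using h by (simp add: field_simps)
    also have "(1-s)*m + s*M = a" using k by (simp add: algebra_simps)
    finally show "a / M = (1 - s) * (m / M) + s * 1" by simp
  qed (use assms s01 in auto)
  also have "\<dots> = (1 - s) * ln ((n+1)/(n+m/M))"
  proof -
    have "0 < n + m/M" using assms by (simp add: add_nonneg_pos)
    thus ?thesis using assms by (simp add: ln_div)
  qed
  also have "\<dots> \<le> (1 - s) * ln ((n+1)/(n+m/M)) + s * ln ((n+1)/(n + (1-M)/(1-m)))"
  proof -
    have "(1-M)/(1-m) \<le> 1" using assms by simp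
    hence "0 \<le> ln ((n+1)/(n + (1-M)/(1-m)))" using assms by (intro ln_ratio_nonneg) auto
    thus ?thesis using s01 by simp
  qed
  finally show ?thesis by (simp add: s_def)
qed

lemma factor_nJ:
  fixes n a z m M :: real
  assumes "0 < m" "m < M" "M < 1" "m \<le> a" "a \<le> M" "m \<le> z" "z \<le> M" "0 \<le> n"
  shows "ln ((n+1)/(n + (1 - a)/(1 - z))) \<le> (1 - (a-m)/(M-m)) * ln ((n+1)/(n+m/M))
           + ((a-m)/(M-m)) * ln ((n+1)/(n + (1-M)/(1-m)))"
proof -
  define s where "s = (a-m)/(M-m)"
  define r where "r = (1-M)/(1-m)"
  have s01: "0 \<le> s" "s \<le> 1" using assms by (auto simp: s_def divide_simps)
  have r0: "0 < r" using assms by (simp add: r_def)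
  have az: "(1-a)/(1-m) \<le> (1-a)/(1-z)" using assms by (intro divide_left_mono) auto
  have ap: "0 < (1-a)/(1-m)" using assms by simp
  have "ln ((n+1)/(n + (1-a)/(1-z))) \<le> ln ((n+1)/(n + (1-a)/(1-m)))"
  proof -
    have p: "0 < n + (1-a)/(1-z)" "0 < n + (1-a)/(1-m)" using assms by (simp_all add: add_nonneg_pos)
    have "(n+1)/(n+(1-a)/(1-z)) \<le> (n+1)/(n+(1-a)/(1-m))" using p az assms by (intro divide_left_mono) auto
    moreover have "0 < (n+1)/(n+(1-a)/(1-z))" using p assms by simp
    ultimately show ?thesis by (rule ln_mono)
  qed
  also have "\<dots> = ln (n+1) - ln (n + (1-a)/(1-m))"
  proof -
    have "0 < n + (1-a)/(1-m)" using ap assms by linarith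
    thus ?thesis using assms by (simp add: ln_div)
  qed
  also have "\<dots> \<le> (1 - s) * (ln (n + 1) - ln (n + 1)) + s * (ln (n + 1) - ln (n + r))"
  proof (rule chord_gen)
    have h: "M - m \<noteq> 0" "1 - m \<noteq> 0" using assms by auto
    have k: "s*(M-m) = a - m" using h by (simp add: s_def)
    have "(1 - s) * 1 + s * r = ((1-s)*(1-m) + s*(1-M))/(1-m)" using h by (simp add: r_def field_simps)
    also have "(1-s)*(1-m) + s*(1-M) = 1 - a" using k by (simp add: algebra_simps)
    finally show "(1-a)/(1-m) = (1 - s) * 1 + s * r" by simp
  qed (use assms s01 r0 in auto)
  also have "\<dots> = s * ln ((n+1)/(n+r))" using assms r0 by (simp add: ln_div)
  also have "\<dots> \<le> (1 - s) * ln ((n+1)/(n+m/M)) + s * ln ((n+1)/(n + r))"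
  proof -
    have "m/M \<le> 1" using assms by simp
    hence "0 \<le> ln ((n+1)/(n + m/M))" using assms by (intro ln_ratio_nonneg) auto
    thus ?thesis using s01 by simp
  qed
  finally show ?thesis by (simp add: s_def r_def)
qed



lemma lnq_bound:
  fixes t :: real assumes "0 \<le> t" "t \<le> 1"
  shows "ln (1 - t/2 + t^2/20) \<le> (1 - t) - (1 - t/2 + t^2/20)"
proof -
  define q where "q = 1 - t/2 + t^2/20"
  have t2: "t^2 \<le> t" using assms by (simp add: power2_eq_square mult_left_le_one_le)
  have "0 \<le> t^2" by simp
  hence q0: "0 < q" "q \<le> 1" using assms t2 unfolding q_def by linarith+
  have "ln q \<le> 2 * (q - 1) / (q + 1)" by (rule ln_le_pade2[OF q0])
  also have "\<dots> \<le> (1 - t) - q"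
  proof -
    have e: "((1 - t) - q) * (q + 1) - 2 * (q - 1) = t^2 * (20 - t^2) / 400"
      by (simp add: q_def algebra_simps power2_eq_square eval_nat_numeral)
    have "t^2 \<le> 1" using assms by (simp add: power_le_one)
    hence "t^2 * (20 - t^2) / 400 \<ge> 0" by simp
    hence "2 * (q - 1) \<le> ((1 - t) - q) * (q + 1)" using e by linarith
    thus ?thesis using q0 by (simp add: divide_simps)
  qed
  finally show ?thesis by (simp add: q_def)
qed

lemma V0_bound:
  fixes n p :: real assumes "0 \<le> n" "0 < p" "p \<le> 1"
  shows "n * ln ((n+1)/(n+p)) \<le> 1 - p"
proof -
  have e: "(n+1)/(n+p) = 1 + (1-p)/(n+p)" using assms by (simp add: field_simps)
  have "ln ((n+1)/(n+p)) \<le> (1-p)/(n+p)" unfolding e using assms by (intro ln_add_one_self_le_self) simp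
  hence "n * ln ((n+1)/(n+p)) \<le> n * ((1-p)/(n+p))" using assms by (intro mult_left_mono) auto
  also have "\<dots> \<le> 1 - p"
  proof -
    have "0 \<le> (1-p)*p" using assms by simp
    hence h: "n*(1-p) \<le> (1-p)*(n+p)" by (simp add: algebra_simps)
    thus ?thesis using assms by (simp add: divide_simps)
  qed
  finally show ?thesis .
qed

lemma V1_bound:
  fixes n m M w W :: real
  assumes n2: "2 \<le> n" and m0: "0 < m" and mM: "m \<le> M" and M1: "M < 1" and w0: "0 < w"
    and wW: "w \<le> W" and pr: "m * W \<le> M * w"
  shows "- ln ((w + n*W)/(n+1)) + n * ln ((n+1)/(n + (1-M)/(1-m)))
         \<le> max (- ln W + (1 - (1-M)/(1-m))) (- ln w + (1 - m/M))"
proof -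
  define r where "r = (1-M)/(1-m)"
  define t where "t = 1 - r"
  define rho where "rho = w / W"
  define q where "q = 1 - t/2 + t^2/20"
  have W0: "0 < W" using w0 wW by simp
  have r01: "0 < r" "r \<le> 1" using assms by (auto simp: r_def)
  have t01: "0 \<le> t" "t \<le> 1" using r01 by (auto simp: t_def)
  have rho0: "0 < rho" "rho \<le> 1" using w0 W0 wW by (auto simp: rho_def)
  have prho: "m / M \<le> rho" using pr m0 mM W0 by (simp add: rho_def divide_simps mult.commute)
  have t2: "t^2 \<le> t" using t01 by (simp add: power2_eq_square mult_left_le_one_le)
  have "0 \<le> t^2" by simp
  hence q0: "1/2 \<le> q" "q \<le> 1" using t01 t2 unfolding q_def by linarith+
  have key: "n * ln ((n+1)/(n+1-t)) + ln ((n+1)/(n + q)) \<le> t"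
    using key_ineq[OF n2 t01] by (simp add: q_def)
  have tr: "1 - (1-M)/(1-m) = t" by (simp add: t_def r_def)
  have Lr: "n * ln ((n+1)/(n + (1-M)/(1-m))) = n * ln ((n+1)/(n+1-t))"
  proof -
    have e: "n + (1-M)/(1-m) = n+1-t" by (simp add: t_def r_def)
    show ?thesis by (simp only: e)
  qed
  have u1: "(w + n*W)/(n+1) = W * ((n + rho)/(n+1))"
  proof -
    have "W * (n + rho) = w + n*W" using W0 by (simp add: rho_def algebra_simps)
    thus ?thesis by (metis times_divide_eq_right)
  qed
  have lu1: "- ln ((w + n*W)/(n+1)) = - ln W + ln ((n+1)/(n+rho))"
    unfolding u1 using W0 rho0 n2 by (simp add: ln_mult ln_div)
  have lw: "ln w = ln W + ln rho" using W0 w0 by (simp add: rho_def ln_div)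
  show ?thesis
  proof (cases "q \<le> rho")
    case True
    have "(n+1)/(n+rho) \<le> (n+1)/(n+q)" using True n2 q0 by (intro divide_left_mono) auto
    hence "ln ((n+1)/(n+rho)) \<le> ln ((n+1)/(n+q))" using n2 rho0 by (intro ln_mono) auto
    hence "- ln ((w + n*W)/(n+1)) + n * ln ((n+1)/(n + (1-M)/(1-m))) \<le> - ln W + (1 - (1-M)/(1-m))"
      using key lu1 Lr tr by linarith
    thus ?thesis by linarith
  next
    case False
    have "rho*n \<le> q*n" using False n2 by (intro mult_right_mono) auto
    hence h: "(n+q)*rho \<le> q*(n+rho)" by (simp add: algebra_simps)
    have "(n+q)/(n+rho) \<le> q/rho" using h n2 rho0 by (simp add: divide_simps)
    hence "ln ((n+q)/(n+rho)) \<le> ln (q/rho)" using n2 rho0 q0 by (intro ln_mono) auto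
    moreover have "ln ((n+1)/(n+rho)) = ln ((n+1)/(n+q)) + ln ((n+q)/(n+rho))"
      using n2 rho0 q0 by (simp add: ln_div)
    moreover have "ln (q/rho) = ln q - ln rho" using rho0 q0 by (simp add: ln_div)
    moreover have "ln q \<le> (1 - t) - q" using lnq_bound[OF t01] unfolding q_def .
    ultimately have "- ln ((w + n*W)/(n+1)) + n * ln ((n+1)/(n + (1-M)/(1-m))) \<le> - ln W - ln rho + 1 - q"
      using key lu1 Lr by linarith
    also have "\<dots> \<le> - ln w + (1 - m/M)" using lw False prho by simp
    finally show ?thesis by linarith
  qed
qed



lemma ub_lt:
  fixes m M \<epsilon> :: real and N :: nat and J :: "nat set" and a z :: "nat \<Rightarrow> real"
  assumes m0: "0 < m" and mM: "m < M" and M1: "M < 1" and e0: "0 \<le> \<epsilon>" and N1: "N > 1"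
    and J: "J \<subseteq> {1..N}" and a: "\<forall>i\<in>{1..N}. a i \<in> {m..M}" and z: "\<forall>i\<in>{1..N}. z i \<in> {m..M}"
  shows "gfun \<epsilon> m J N a z \<le> max (inverse (exp (-\<epsilon>) + (1 - exp (-\<epsilon>)) * M) * exp (1 - (1 - M) / (1 - m)))
               (inverse (exp (-\<epsilon>) + (1 - exp (-\<epsilon>)) * m) * exp (1 - m / M))"
proof -
  define c where "c = exp (-\<epsilon>)"
  define d where "d = 1 - c"
  define w where "w = c + d * m"
  define W where "W = c + d * M"
  define n where "n = real N"
  define A where "A = inverse W * exp (1 - (1 - M) / (1 - m))"
  define B where "B = inverse w * exp (1 - m / M)"
  have c0: "0 < c" "c \<le> 1" using e0 by (auto simp: c_def)
  have d0: "0 \<le> d" using c0 by (simp add: d_def)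
  have w0: "0 < w" using c0 d0 m0 by (simp add: w_def add_pos_nonneg)
  have wW: "w \<le> W" using d0 mM by (simp add: w_def W_def mult_left_mono)
  have W0: "0 < W" using w0 wW by simp
  have pr: "m * W \<le> M * w"
  proof -
    have "m * c \<le> M * c" using mM c0 by simp
    thus ?thesis by (simp add: w_def W_def algebra_simps)
  qed
  have n2: "2 \<le> n" using N1 by (simp add: n_def)
  define Lp where "Lp = ln ((n+1)/(n+m/M))"
  define Lr where "Lr = ln ((n+1)/(n + (1-M)/(1-m)))"
  define s where "s = (\<lambda>i. (a i - m)/(M-m))"
  define h where "h = (\<lambda>i. (1 - s i) * Lp + s i * Lr)"
  define f where "f = (\<lambda>i. (n+1)/(n + a i / z i))"
  define g where "g = (\<lambda>i. (n+1)/(n + (1 - a i)/(1 - z i)))"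
  define K where "K = (\<Sum>i=1..N. s i)"
  define pref where "pref = c + d * ((m + (\<Sum>i=1..N. a i)) / (n + 1))"
  have ai: "m \<le> a i" "a i \<le> M" if "i \<in> {1..N}" for i using a that by auto
  have zi: "m \<le> z i" "z i \<le> M" if "i \<in> {1..N}" for i using z that by auto
  have fpos: "0 < f i" if "i \<in> {1..N}" for i
  proof -
    have "0 < a i / z i" using ai[OF that] zi[OF that] m0 by simp
    thus ?thesis using n2 by (simp add: f_def)
  qed
  have gpos: "0 < g i" if "i \<in> {1..N}" for i
  proof -
    have "0 < (1 - a i) / (1 - z i)" using ai[OF that] zi[OF that] M1 by simp
    thus ?thesis using n2 by (simp add: g_def)
  qed
  have fJ: "ln (f i) \<le> h i" if "i \<in> {1..N}" for i
    unfolding f_def h_def s_def Lp_def Lr_def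
    using factor_J[OF m0 mM M1 ai[OF that] zi[OF that]] n2 by simp
  have gJ: "ln (g i) \<le> h i" if "i \<in> {1..N}" for i
    unfolding g_def h_def s_def Lp_def Lr_def
    using factor_nJ[OF m0 mM M1 ai[OF that] zi[OF that]] n2 by simp
  have finJ: "finite J" using J finite_subset by blast
  have S1: "(\<Sum>i\<in>J. ln (f i)) \<le> (\<Sum>i\<in>J. h i)" using J fJ by (intro sum_mono) auto
  have S2: "(\<Sum>i\<in>{1..N}-J. ln (g i)) \<le> (\<Sum>i\<in>{1..N}-J. h i)" using gJ by (intro sum_mono) auto
  have S3: "(\<Sum>i\<in>{1..N}. h i) = (\<Sum>i\<in>{1..N}-J. h i) + (\<Sum>i\<in>J. h i)"
    using sum.subset_diff[OF J] by simp
  have S4: "(\<Sum>i\<in>{1..N}. h i) = n * Lp - K * Lp + K * Lr"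
  proof -
    have "(\<Sum>i\<in>{1..N}. h i) = (\<Sum>i\<in>{1..N}. Lp + (Lr - Lp) * s i)"
      by (intro sum.cong) (auto simp: h_def algebra_simps)
    also have "\<dots> = n * Lp + (Lr - Lp) * K"
      by (simp add: sum.distrib K_def n_def sum_distrib_left[symmetric])
    finally show ?thesis by (simp add: algebra_simps)
  qed
  have K0: "0 \<le> K" unfolding K_def s_def using ai mM by (intro sum_nonneg) auto
  have Kn: "K \<le> n"
  proof -
    have "K \<le> (\<Sum>i=1..N. 1)" unfolding K_def s_def using ai mM by (intro sum_mono) (auto simp: divide_simps)
    thus ?thesis by (simp add: n_def)
  qed
  have suma: "(\<Sum>i=1..N. a i) = n * m + (M - m) * K"
  proof -
    have "(\<Sum>i=1..N. a i) = (\<Sum>i=1..N. m + (M - m) * s i)"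
      using mM by (intro sum.cong) (auto simp: s_def)
    thus ?thesis by (simp add: sum.distrib sum_distrib_left n_def K_def)
  qed
  define lam where "lam = K / n"
  have lam01: "0 \<le> lam" "lam \<le> 1" using K0 Kn n2 by (auto simp: lam_def divide_simps)
  have Kl: "K = lam * n" using n2 by (simp add: lam_def)
  define u1 where "u1 = (w + n * W) / (n + 1)"
  have u10: "0 < u1" using w0 W0 n2 by (simp add: u1_def add_pos_pos)
  have prefeq: "pref = (1 - lam) * w + lam * u1"
  proof -
    have "pref = w + (W - w) * K / (n + 1)"
      using n2 unfolding pref_def suma by (simp add: w_def W_def d_def field_simps)
    also have "\<dots> = (1 - lam) * w + lam * u1"
      using n2 unfolding u1_def Kl by (simp add: field_simps)
    finally show ?thesis .
  qed
  have pref0: "0 < pref"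
  proof (cases "lam < 1")
    case True
    hence "0 < (1 - lam) * w" using w0 by simp
    moreover have "0 \<le> lam * u1" using lam01 u10 by simp
    ultimately show ?thesis using prefeq by linarith
  next
    case False
    hence "lam = 1" using lam01 by simp
    thus ?thesis using u10 prefeq by simp
  qed
  have lnpref: "(1 - lam) * ln w + lam * ln u1 \<le> ln pref"
    unfolding prefeq using ln_concave2[OF w0 u10 lam01] .
  define G where "G = gfun \<epsilon> m J N a z"
  have Geq: "G = inverse pref * prod f J * prod g ({1..N} - J)"
    by (simp add: G_def gfun_def pref_def c_def d_def f_def g_def n_def)
  have P1: "0 < prod f J" using J fpos by (intro prod_pos) auto
  have P2: "0 < prod g ({1..N} - J)" using gpos by (intro prod_pos) auto
  have G0: "0 < G" using Geq pref0 P1 P2 by simp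
  have lnG: "ln G = - ln pref + (\<Sum>i\<in>J. ln (f i)) + (\<Sum>i\<in>{1..N}-J. ln (g i))"
  proof -
    have "ln G = ln (inverse pref) + ln (prod f J) + ln (prod g ({1..N} - J))"
      unfolding Geq using pref0 P1 P2 by (simp add: ln_mult_pos)
    also have "ln (prod f J) = (\<Sum>i\<in>J. ln (f i))" using finJ J fpos
      by (intro ln_prod) (auto dest: less_imp_neq[symmetric] simp: subset_iff)
    also have "ln (prod g ({1..N} - J)) = (\<Sum>i\<in>{1..N}-J. ln (g i))" using gpos
      by (intro ln_prod) (auto dest: less_imp_neq[symmetric])
    finally show ?thesis by (simp add: ln_inverse)
  qed
  define V0 where "V0 = - ln w + n * Lp"
  define V1 where "V1 = - ln u1 + n * Lr"
  have lnG_le: "ln G \<le> (1 - lam) * V0 + lam * V1"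
  proof -
    have "ln G \<le> - ln pref + (n * Lp - K * Lp + K * Lr)" using lnG S1 S2 S3 S4 by linarith
    also have "\<dots> \<le> - ((1 - lam) * ln w + lam * ln u1) + (n * Lp - K * Lp + K * Lr)" using lnpref by linarith
    also have "\<dots> = (1 - lam) * V0 + lam * V1" unfolding V0_def V1_def Kl by (simp add: algebra_simps)
    finally show ?thesis .
  qed
  have cvx: "(1 - lam) * V0 + lam * V1 \<le> max V0 V1"
  proof -
    have "(1 - lam) * V0 \<le> (1 - lam) * max V0 V1" using lam01 by (intro mult_left_mono) auto
    moreover have "lam * V1 \<le> lam * max V0 V1" using lam01 by (intro mult_left_mono) auto
    ultimately show ?thesis by (simp add: algebra_simps) 
  qed
  have lnA: "ln A = - ln W + (1 - (1 - M) / (1 - m))" using W0 by (simp add: A_def ln_mult_pos ln_inverse)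
  have lnB: "ln B = - ln w + (1 - m / M)" using w0 by (simp add: B_def ln_mult_pos ln_inverse)
  have A0: "0 < A" using W0 by (simp add: A_def)
  have B0: "0 < B" using w0 by (simp add: B_def)
  have V0le: "V0 \<le> ln B"
    unfolding V0_def lnB Lp_def using V0_bound[of n "m/M"] n2 m0 mM by simp
  have V1le: "V1 \<le> max (ln A) (ln B)"
    unfolding V1_def lnA lnB Lr_def u1_def using V1_bound[OF n2 m0 _ M1 w0 wW pr] mM by simp
  have "ln G \<le> max (ln A) (ln B)" using lnG_le cvx V0le V1le by linarith
  also have "\<dots> = ln (max A B)" using A0 B0 by (auto simp: max_def)
  finally have "G \<le> max A B" using G0 A0 B0 by simp
  thus ?thesis by (simp add: G_def A_def B_def W_def w_def c_def d_def)
qed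



lemma lim_pow: "0 < x \<Longrightarrow> (\<lambda>n::nat. ((real n + 1)/(real n + x))^n) \<longlonglongrightarrow> exp (1 - x)"
  by real_asymp

lemma lim_avg: "(\<lambda>n::nat. (m + real n * M)/(real n + 1)) \<longlonglongrightarrow> (M::real)"
  by real_asymp

lemma ub_eq:
  fixes m \<epsilon> :: real and N :: nat and J :: "nat set" and a z :: "nat \<Rightarrow> real"
  assumes m0: "0 < m" and M1: "m < 1" and e0: "0 \<le> \<epsilon>"
    and J: "J \<subseteq> {1..N}" and a: "\<forall>i\<in>{1..N}. a i \<in> {m..m}" and z: "\<forall>i\<in>{1..N}. z i \<in> {m..m}"
  shows "gfun \<epsilon> m J N a z = inverse (exp (-\<epsilon>) + (1 - exp (-\<epsilon>)) * m)"
proof -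
  have ai: "a i = m" "z i = m" if "i \<in> {1..N}" for i using a z that by auto
  have p1: "(\<Prod>i\<in>J. (real N + 1) / (real N + a i / z i)) = 1"
    using J m0 by (intro prod.neutral) (auto simp: ai subset_iff)
  have p2: "(\<Prod>i\<in>{1..N} - J. (real N + 1) / (real N + (1 - a i) / (1 - z i))) = 1"
    using M1 by (intro prod.neutral) (auto simp: ai)
  have s: "(\<Sum>i=1..N. a i) = real N * m" using ai by simp
  have "(m + real N * m) / (real N + 1) = m" by (simp add: field_simps)
  thus ?thesis unfolding gfun_def p1 p2 s by simp
qed

theorem theorem6:
  fixes m M \<epsilon> :: real
  assumes "m \<in> mgrid" and "M \<in> mgrid" and "m \<le> M" and "\<epsilon> \<in> eps_grid"
  shows "bdd_above (gvals \<epsilon> m M) \<and>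
         Sup (gvals \<epsilon> m M) =
           max (inverse (exp (-\<epsilon>) + (1 - exp (-\<epsilon>)) * M) * exp (1 - (1 - M) / (1 - m)))
               (inverse (exp (-\<epsilon>) + (1 - exp (-\<epsilon>)) * m) * exp (1 - m / M))"
proof -
  have m0: "0 < m" and m1: "m < 1" using assms(1) by (auto simp: mgrid_def)
  have M0: "0 < M" and M1: "M < 1" using assms(2) by (auto simp: mgrid_def)
  have mM: "m \<le> M" by fact
  have e0: "0 \<le> \<epsilon>" using assms(4) by (auto simp: eps_grid_def)
  define c where "c = exp (-\<epsilon>)"
  define d where "d = 1 - c"
  have c0: "0 < c" "c \<le> 1" using e0 by (auto simp: c_def)
  have d0: "0 \<le> d" using c0 by (simp add: d_def)
  define A where "A = inverse (exp (-\<epsilon>) + (1 - exp (-\<epsilon>)) * M) * exp (1 - (1 - M) / (1 - m))"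
  define B where "B = inverse (exp (-\<epsilon>) + (1 - exp (-\<epsilon>)) * m) * exp (1 - m / M)"
  have W0: "0 < c + d * M" using c0 d0 M0 by (simp add: add_pos_nonneg)
  have w0: "0 < c + d * m" using c0 d0 m0 by (simp add: add_pos_nonneg)
  have ub: "x \<le> max A B" if xin: "x \<in> gvals \<epsilon> m M" for x
  proof -
    obtain J N a z where x: "x = gfun \<epsilon> m J N a z" and N1: "N > 1" and J: "J \<subseteq> {1..N}"
      and a: "\<forall>i\<in>{1..N}. a i \<in> {m..M}" and z: "\<forall>i\<in>{1..N}. z i \<in> {m..M}"
      using xin unfolding gvals_def by blast
    show ?thesis
    proof (cases "m < M")
      case True
      show ?thesis unfolding x A_def B_def by (rule ub_lt[OF m0 True M1 e0 N1 J a z])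
    next
      case False
      hence MM: "M = m" using mM by simp
      have "x = inverse (exp (-\<epsilon>) + (1 - exp (-\<epsilon>)) * m)"
        unfolding x by (rule ub_eq[OF m0 m1 e0 J]) (use a z MM in auto)
      also have "\<dots> = A" unfolding A_def MM using m1 by simp
      finally show ?thesis by simp
    qed
  qed
  define gA where "gA = (\<lambda>N::nat. gfun \<epsilon> m {} N (\<lambda>_. M) (\<lambda>_. m))"
  define gB where "gB = (\<lambda>N::nat. gfun \<epsilon> m {1..N} N (\<lambda>_. m) (\<lambda>_. M))"
  have gA_in: "gA N \<in> gvals \<epsilon> m M" if "N > 1" for N
    unfolding gA_def gvals_def using that mM
    by (intro CollectI exI[of _ "{}"] exI[of _ N] exI[of _ "\<lambda>_. M"] exI[of _ "\<lambda>_. m"]) auto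
  have gB_in: "gB N \<in> gvals \<epsilon> m M" if "N > 1" for N
    unfolding gB_def gvals_def using that mM
    by (intro CollectI exI[of _ "{1..N}"] exI[of _ N] exI[of _ "\<lambda>_. m"] exI[of _ "\<lambda>_. M"]) auto
  have bdd: "bdd_above (gvals \<epsilon> m M)" using ub by (intro bdd_aboveI) auto
  have ne: "gvals \<epsilon> m M \<noteq> {}" using gB_in[of 2] by auto
  have le: "Sup (gvals \<epsilon> m M) \<le> max A B" using ne ub by (intro cSup_least) auto
  have gA_eq: "gA N = inverse (c + d * ((m + real N * M) / (real N + 1)))
      * ((real N + 1) / (real N + (1 - M) / (1 - m)))^N" for N
    by (simp add: gA_def gfun_def c_def d_def)
  have gB_eq: "gB N = inverse (c + d * m) * ((real N + 1) / (real N + m / M))^N" for N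
  proof -
    have e: "(m + (\<Sum>i=1..N. m)) / (real N + 1) = m" by (simp add: field_simps)
    have p: "(\<Prod>i\<in>{1..N}-{1..N}. (real N + 1) / (real N + (1 - m) / (1 - M))) = 1" by simp
    have pr: "(\<Prod>i\<in>{1..N}. (real N + 1) / (real N + m / M)) = ((real N + 1) / (real N + m / M))^N" by simp
    show ?thesis unfolding gB_def gfun_def by (simp only: e p pr c_def d_def mult_1_right)
  qed
  have limA: "gA \<longlonglongrightarrow> A"
  proof -
    have "(\<lambda>N. inverse (c + d * ((m + real N * M) / (real N + 1)))) \<longlonglongrightarrow> inverse (c + d * M)"
      using W0 by (intro tendsto_intros lim_avg) auto
    moreover have "(\<lambda>N::nat. ((real N + 1) / (real N + (1 - M) / (1 - m)))^N) \<longlonglongrightarrow> exp (1 - (1 - M) / (1 - m))"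
      using M1 m1 by (intro lim_pow) simp
    ultimately have "(\<lambda>N. inverse (c + d * ((m + real N * M) / (real N + 1)))
      * ((real N + 1) / (real N + (1 - M) / (1 - m)))^N) \<longlonglongrightarrow> inverse (c + d * M) * exp (1 - (1 - M) / (1 - m))"
      by (rule tendsto_mult)
    thus ?thesis unfolding gA_eq[abs_def] A_def c_def d_def .
  qed
  have limB: "gB \<longlonglongrightarrow> B"
  proof -
    have "(\<lambda>N::nat. ((real N + 1) / (real N + m / M))^N) \<longlonglongrightarrow> exp (1 - m / M)"
      using m0 M0 by (intro lim_pow) simp
    hence "(\<lambda>N. inverse (c + d * m) * ((real N + 1) / (real N + m / M))^N) \<longlonglongrightarrow> inverse (c + d * m) * exp (1 - m / M)"
      by (intro tendsto_mult tendsto_const)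
    thus ?thesis unfolding gB_eq[abs_def] B_def c_def d_def .
  qed
  have "A \<le> Sup (gvals \<epsilon> m M)"
  proof (rule LIMSEQ_le_const2[OF limA])
    show "\<exists>N. \<forall>n\<ge>N. gA n \<le> Sup (gvals \<epsilon> m M)"
      using gA_in bdd by (intro exI[of _ 2]) (auto intro!: cSup_upper)
  qed
  moreover have "B \<le> Sup (gvals \<epsilon> m M)"
  proof (rule LIMSEQ_le_const2[OF limB])
    show "\<exists>N. \<forall>n\<ge>N. gB n \<le> Sup (gvals \<epsilon> m M)"
      using gB_in bdd by (intro exI[of _ 2]) (auto intro!: cSup_upper)
  qed
  ultimately have "Sup (gvals \<epsilon> m M) = max A B" using le by simp
  thus ?thesis using bdd by (simp add: A_def B_def)
qed

end
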